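(* Let $\mathcal G$ be a finite bipartite graph and $\Gamma=A(\mathcal G)$. Then for all $n\ge 1$, \[ s_n(\Gamma)\le \Pi(n)^{\alpha(\mathcal G)}\cdot n\cdot (n!)^{\alpha(\mathcal G)-1}. \]
   Context: $A(\mathcal G)=\langle\sigma_v,\ v\in\mathcal G\mid \sigma_v\sigma_w=\sigma_w\sigma_v \text{ for adjacent } v,w\rangle$ is the right-angled Artin group of the finite simple graph $\mathcal G$. $s_n(\Gamma)$ is the number of subgroups of index exactly $n$ in $\Gamma$. $\alpha(\mathcal G)$ is the independence number of $\mathcal G$, i.e. the maximal size of a set of pairwise non-adjacent vertices. $\Pi(n)$ is the number of partitions of the integer $n$. *)

theory Defs
  imports "HOL-Algebra.Coset" "HOL-Library.Multiset"
begin

definition simple_graph :: "'a set \<Rightarrow> ('a \<Rightarrow> 'a \<Rightarrow> bool) \<Rightarrow> bool" where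
  "simple_graph V E \<longleftrightarrow> finite V \<and> V \<noteq> {} \<and>
     (\<forall>v w. E v w \<longrightarrow> v \<in> V \<and> w \<in> V) \<and>
     (\<forall>v w. E v w \<longrightarrow> E w v) \<and> (\<forall>v. \<not> E v v)"

definition bipartite :: "'a set \<Rightarrow> ('a \<Rightarrow> 'a \<Rightarrow> bool) \<Rightarrow> bool" where
  "bipartite V E \<longleftrightarrow> (\<exists>A B. A \<union> B = V \<and> A \<inter> B = {} \<and>
     (\<forall>v w. E v w \<longrightarrow> (v \<in> A \<and> w \<in> B) \<or> (v \<in> B \<and> w \<in> A)))"

definition independent_set :: "'a set \<Rightarrow> ('a \<Rightarrow> 'a \<Rightarrow> bool) \<Rightarrow> 'a set \<Rightarrow> bool" where
  "independent_set V E S \<longleftrightarrow> S \<subseteq> V \<and> (\<forall>v\<in>S. \<forall>w\<in>S. \<not> E v w)"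

definition independence_number :: "'a set \<Rightarrow> ('a \<Rightarrow> 'a \<Rightarrow> bool) \<Rightarrow> nat" where
  "independence_number V E = Max {card S | S. independent_set V E S}"

definition num_partitions :: "nat \<Rightarrow> nat" where
  "num_partitions n = card {p :: nat multiset. 0 \<notin># p \<and> sum_mset p = n}"

text \<open>Words are lists of letters (v, b): (v, True) stands for sigma_v,
  (v, False) for its inverse.\<close>
type_synonym 'a letter = "'a \<times> bool"

inductive raag_step :: "'a set \<Rightarrow> ('a \<Rightarrow> 'a \<Rightarrow> bool) \<Rightarrow> 'a letter list \<Rightarrow> 'a letter list \<Rightarrow> bool"
  for V E where
  cancel: "v \<in> V \<Longrightarrow> raag_step V E (xs @ [(v, b), (v, \<not> b)] @ ys) (xs @ ys)"
| commute: "E v w \<Longrightarrow> raag_step V E (xs @ [(v, b), (w, c)] @ ys) (xs @ [(w, c), (v, b)] @ ys)"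

definition raag_words :: "'a set \<Rightarrow> 'a letter list set" where
  "raag_words V = lists (V \<times> UNIV)"

definition raag_rel :: "'a set \<Rightarrow> ('a \<Rightarrow> 'a \<Rightarrow> bool) \<Rightarrow> ('a letter list \<times> 'a letter list) set" where
  "raag_rel V E = {(x, y). x \<in> raag_words V \<and> y \<in> raag_words V \<and>
      (x, y) \<in> ({(a, b). raag_step V E a b} \<union> {(a, b). raag_step V E b a})\<^sup>*}"

definition RAAG :: "'a set \<Rightarrow> ('a \<Rightarrow> 'a \<Rightarrow> bool) \<Rightarrow> 'a letter list set monoid" where
  "RAAG V E = \<lparr> carrier = raag_words V // raag_rel V E,
     monoid.mult = (\<lambda>X Y. \<Union>{raag_rel V E `` {x @ y} | x y. x \<in> X \<and> y \<in> Y}),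
     one = raag_rel V E `` {[]} \<rparr>"

definition subgroups_of_index :: "('g, 'b) monoid_scheme \<Rightarrow> nat \<Rightarrow> 'g set set" where
  "subgroups_of_index G n = {H. subgroup H G \<and> card (rcosets\<^bsub>G\<^esub> H) = n}"

end

theory Submission
  imports Defs "HOL-Combinatorics.Permutations" "HOL-Combinatorics.Orbits"
begin

definition ctype :: "('b \<Rightarrow> 'b) \<Rightarrow> 'b set \<Rightarrow> nat multiset" where
  "ctype f T = image_mset card (mset_set (orbit f ` T))"

lemma orbit_same: "permutation f \<Longrightarrow> y \<in> orbit f x \<Longrightarrow> orbit f y = orbit f x"
  by (meson cyclic_on_orbit' orbit_cyclic_eq3)

lemma orbit_sub:
  assumes "f ` T \<subseteq> T" "x \<in> T" shows "orbit f x \<subseteq> T"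
proof
  fix y assume "y \<in> orbit f x" then show "y \<in> T"
    by induct (use assms in auto)
qed

lemma period_facts:
  assumes "permutation f"
  shows "card (orbit f x) > 0" "(f ^^ card (orbit f x)) x = x"
    "(f^^i) x = (f^^j) x \<longleftrightarrow> i mod card (orbit f x) = j mod card (orbit f x)"
proof -
  have xo: "x \<in> orbit f x" by (rule permutation_self_in_orbit[OF assms])
  define d where "d = funpow_dist1 f x x"
  have oe: "orbit f x = (\<lambda>n. (f ^^ n) x) ` {0..<d}" unfolding d_def by (rule orbit_conv_funpow_dist1[OF xo])
  have inj: "inj_on (\<lambda>n. (f ^^ n) x) {0..<d}" unfolding d_def by (rule inj_on_funpow_dist1[OF xo])
  have cd: "card (orbit f x) = d" using oe inj by (simp add: card_image)
  show "card (orbit f x) > 0" using cd d_def by simp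
  have px: "(f ^^ d) x = x" unfolding d_def by (rule funpow_dist1_prop[OF xo])
  then show "(f ^^ card (orbit f x)) x = x" using cd by simp
  have dpos: "d > 0" using d_def by simp
  show "(f^^i) x = (f^^j) x \<longleftrightarrow> i mod card (orbit f x) = j mod card (orbit f x)"
  proof
    assume "(f^^i) x = (f^^j) x"
    then have "(f^^(i mod d)) x = (f^^(j mod d)) x" using funpow_mod_eq[OF px] by metis
    moreover have "i mod d \<in> {0..<d}" "j mod d \<in> {0..<d}" using dpos by auto
    ultimately show "i mod card (orbit f x) = j mod card (orbit f x)" using inj cd
      by (metis inj_on_def)
  next
    assume "i mod card (orbit f x) = j mod card (orbit f x)"
    then show "(f^^i) x = (f^^j) x" using funpow_mod_eq[OF px] cd by metis
  qed
qed

lemma orbit_conj: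
  assumes f: "permutation f" and g: "permutation g" and c: "card (orbit f x) = card (orbit g y)"
  shows "\<exists>\<rho>. bij_betw \<rho> (orbit f x) (orbit g y) \<and> (\<forall>z\<in>orbit f x. \<rho> (f z) = g (\<rho> z))"
proof -
  have M: "(f^^i) x = (f^^j) x \<longleftrightarrow> (g^^i) y = (g^^j) y" for i j
    using period_facts(3)[OF f, where x=x and i=i and j=j] period_facts(3)[OF g, where x=y and i=i and j=j] c by simp
  have of: "orbit f x = {(f ^^ n) x | n. True}" by (rule orbit_altdef_permutation[OF f])
  have og: "orbit g y = {(g ^^ n) y | n. True}" by (rule orbit_altdef_permutation[OF g])
  define \<rho> where "\<rho> z = (g ^^ (SOME i. z = (f^^i) x)) y" for z
  have rho: "\<rho> ((f^^i) x) = (g^^i) y" for i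
  proof -
    have "(f^^i) x = (f^^(SOME j. (f^^i) x = (f^^j) x)) x"
      by (rule someI_ex) blast
    then show ?thesis unfolding \<rho>_def using M by metis
  qed
  have "inj_on \<rho> (orbit f x)"
  proof (rule inj_onI)
    fix a b assume "a \<in> orbit f x" "b \<in> orbit f x" "\<rho> a = \<rho> b"
    then obtain i j where "a = (f^^i) x" "b = (f^^j) x" "\<rho> a = \<rho> b" using of by auto
    then show "a = b" using rho M by metis
  qed
  moreover have "\<rho> ` orbit f x = orbit g y"
  proof
    show "\<rho> ` orbit f x \<subseteq> orbit g y" using of og rho by auto
    show "orbit g y \<subseteq> \<rho> ` orbit f x"
    proof
      fix z assume "z \<in> orbit g y"
      then obtain i where "z = (g^^i) y" using og by auto
      then have "z = \<rho> ((f^^i) x)" using rho by simp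
      then show "z \<in> \<rho> ` orbit f x" using of by auto
    qed
  qed
  moreover have "\<forall>z\<in>orbit f x. \<rho> (f z) = g (\<rho> z)"
  proof
    fix z assume "z \<in> orbit f x"
    then obtain i where z: "z = (f^^i) x" using of by auto
    have "f z = (f^^(Suc i)) x" using z by simp
    then show "\<rho> (f z) = g (\<rho> z)" using rho[of "Suc i"] rho[of i] z by simp
  qed
  ultimately show ?thesis unfolding bij_betw_def by blast
qed

lemma conj_exists:
  assumes "finite T" "permutation f" "f ` T = T" "finite T'" "permutation g" "g ` T' = T'"
    "ctype f T = ctype g T'"
  shows "\<exists>\<rho>. bij_betw \<rho> T T' \<and> (\<forall>z\<in>T. \<rho> (f z) = g (\<rho> z))"
  using assms
proof (induction "card T" arbitrary: T T' rule: less_induct)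
  case less
  show ?case
  proof (cases "T = {}")
    case True
    then have "ctype g T' = {#}" using less by (simp add: ctype_def)
    then have "mset_set (orbit g ` T') = {#}" by (simp add: ctype_def)
    then have "orbit g ` T' = {}" using less(5) by (simp add: mset_set_empty_iff)
    then have "T' = {}" by simp
    then show ?thesis using True by (auto simp: bij_betw_def)
  next
    case False
    then obtain x where x: "x \<in> T" by auto
    define Ob where "Ob = orbit f x"
    have ObT: "Ob \<subseteq> T" unfolding Ob_def using orbit_sub[of f T x] less(4) x by simp
    have xO: "x \<in> Ob" unfolding Ob_def by (rule permutation_self_in_orbit[OF less(3)])
    have fin1: "finite (orbit f ` T)" using less by simp
    have fin2: "finite (orbit g ` T')" using less by simp
    have "card Ob \<in># ctype f T" unfolding ctype_def Ob_def using x fin1 by auto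
    then have "card Ob \<in># ctype g T'" using less by simp
    then obtain y where y: "y \<in> T'" "card (orbit g y) = card Ob"
      unfolding ctype_def using fin2 by auto
    define Ob' where "Ob' = orbit g y"
    have ObT': "Ob' \<subseteq> T'" unfolding Ob'_def using orbit_sub[of g T' y] less(7) y by simp
    obtain \<rho>1 where r1: "bij_betw \<rho>1 Ob Ob'" "\<forall>z\<in>Ob. \<rho>1 (f z) = g (\<rho>1 z)"
      using orbit_conj[OF less(3) less(6), of x y] y unfolding Ob_def Ob'_def by auto
    have injf: "inj f" using less(3) bij_is_inj permutation_bijective by blast
    have injg: "inj g" using less(6) bij_is_inj permutation_bijective by blast
    have fO: "f ` Ob = Ob"
    proof (rule endo_inj_surj)
      show "finite Ob" using ObT less(2) finite_subset by blast
      show "f ` Ob \<subseteq> Ob" unfolding Ob_def by (auto intro: orbit.intros)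
      show "inj_on f Ob" using injf by (meson inj_on_subset subset_UNIV)
    qed
    have gO: "g ` Ob' = Ob'"
    proof (rule endo_inj_surj)
      show "finite Ob'" using ObT' less(5) finite_subset by blast
      show "g ` Ob' \<subseteq> Ob'" unfolding Ob'_def by (auto intro: orbit.intros)
      show "inj_on g Ob'" using injg by (meson inj_on_subset subset_UNIV)
    qed
    have fT2: "f ` (T - Ob) = T - Ob" using image_set_diff[OF injf] fO less(4) by simp
    have gT2: "g ` (T' - Ob') = T' - Ob'" using image_set_diff[OF injg] gO less(7) by simp
    have e1: "orbit f ` (T - Ob) = orbit f ` T - {Ob}"
    proof
      show "orbit f ` (T - Ob) \<subseteq> orbit f ` T - {Ob}"
        using permutation_self_in_orbit[OF less(3)] by auto
      show "orbit f ` T - {Ob} \<subseteq> orbit f ` (T - Ob)"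
        using orbit_same[OF less(3)] Ob_def by auto
    qed
    have e2: "orbit g ` (T' - Ob') = orbit g ` T' - {Ob'}"
    proof
      show "orbit g ` (T' - Ob') \<subseteq> orbit g ` T' - {Ob'}"
        using permutation_self_in_orbit[OF less(6)] by auto
      show "orbit g ` T' - {Ob'} \<subseteq> orbit g ` (T' - Ob')"
        using orbit_same[OF less(6)] Ob'_def by auto
    qed
    have OinT: "Ob \<in> orbit f ` T" using x Ob_def by auto
    have OinT': "Ob' \<in> orbit g ` T'" using y Ob'_def by auto
    have c1: "ctype f (T - Ob) = ctype f T - {#card Ob#}"
      unfolding ctype_def e1 using mset_set_Diff[OF fin1, of "{Ob}"] OinT fin1
      by (simp add: image_mset_Diff)
    have c2: "ctype g (T' - Ob') = ctype g T' - {#card Ob#}"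
      unfolding ctype_def e2 using mset_set_Diff[OF fin2, of "{Ob'}"] OinT' fin2 y Ob'_def
      by (simp add: image_mset_Diff)
    have cardlt: "card (T - Ob) < card T"
      by (rule psubset_card_mono) (use less(2) xO x in auto)
    have "\<exists>\<rho>. bij_betw \<rho> (T - Ob) (T' - Ob') \<and> (\<forall>z\<in>T - Ob. \<rho> (f z) = g (\<rho> z))"
      by (rule less(1)[OF cardlt]) (use less(2,3,5,6,8) fT2 gT2 c1 c2 in auto)
    then obtain \<rho>2 where r2: "bij_betw \<rho>2 (T - Ob) (T' - Ob')" "\<forall>z\<in>T - Ob. \<rho>2 (f z) = g (\<rho>2 z)"
      by blast
    define \<rho> where "\<rho> z = (if z \<in> Ob then \<rho>1 z else \<rho>2 z)" for z
    have b1: "bij_betw \<rho> Ob Ob'" using r1(1) by (rule bij_betw_cong[THEN iffD1, rotated]) (simp add: \<rho>_def)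
    have b2: "bij_betw \<rho> (T - Ob) (T' - Ob')" using r2(1)
      by (rule bij_betw_cong[THEN iffD1, rotated]) (simp add: \<rho>_def)
    have "bij_betw \<rho> (Ob \<union> (T - Ob)) (Ob' \<union> (T' - Ob'))"
      by (rule bij_betw_combine[OF b1 b2]) auto
    moreover have "Ob \<union> (T - Ob) = T" "Ob' \<union> (T' - Ob') = T'" using ObT ObT' by auto
    moreover have "\<forall>z\<in>T. \<rho> (f z) = g (\<rho> z)"
    proof
      fix z assume z: "z \<in> T"
      show "\<rho> (f z) = g (\<rho> z)"
      proof (cases "z \<in> Ob")
        case True
        then have "f z \<in> Ob" using fO by auto
        then show ?thesis using True r1 \<rho>_def by simp
      next
        case False
        then have "f z \<in> T - Ob" using fT2 z by auto
        then show ?thesis using False z r2 \<rho>_def by simp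
      qed
    qed
    ultimately show ?thesis by metis
  qed
qed


definition perms :: "nat \<Rightarrow> (nat \<Rightarrow> nat) set" where
  "perms n = {p. p permutes {..<n}}"

definition CP :: "nat \<Rightarrow> ((nat \<Rightarrow> nat) \<times> (nat \<Rightarrow> nat)) set" where
  "CP n = {(p, q). p \<in> perms n \<and> q \<in> perms n \<and> p \<circ> q = q \<circ> p}"

definition parts :: "nat \<Rightarrow> nat multiset set" where
  "parts n = {p. 0 \<notin># p \<and> sum_mset p = n}"

lemma card_perms: "card (perms n) = fact n"
  unfolding perms_def by (rule card_permutations) auto

lemma finite_perms: "finite (perms n)"
  unfolding perms_def by (rule finite_permutations) auto

lemma size_le_sum: "0 \<notin># M \<Longrightarrow> size M \<le> sum_mset (M :: nat multiset)"
  by (induction M) auto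

lemma finite_parts: "finite (parts n)"
proof -
  have "parts n \<subseteq> (\<Union>k\<in>{..n}. multisets_of_size {1..n} k)"
  proof
    fix M assume M: "M \<in> parts n"
    then have z: "0 \<notin># M" and s: "sum_mset M = n" by (auto simp: parts_def)
    have "size M \<le> n" using size_le_sum[OF z] s by simp
    moreover have "set_mset M \<subseteq> {1..n}"
    proof
      fix x assume x: "x \<in># M"
      then have "x \<le> sum_mset M" using sum_mset.remove[OF x] by simp
      then show "x \<in> {1..n}" using x z s by (cases x) auto
    qed
    ultimately show "M \<in> (\<Union>k\<in>{..n}. multisets_of_size {1..n} k)"
      by (auto simp: multisets_of_size_def)
  qed
  moreover have "finite (\<Union>k\<in>{..n}. multisets_of_size {1..n} k)"
    by (auto intro: finite_multisets_of_size)
  ultimately show ?thesis using finite_subset by blast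
qed

lemma card_parts: "card (parts n) = num_partitions n"
  unfolding parts_def num_partitions_def by simp

lemma perm_img: "p permutes S \<Longrightarrow> p ` S = S"
  by (simp add: permutes_image)

lemma ctype_parts:
  assumes p: "p \<in> perms n"
  shows "ctype p {..<n} \<in> parts n"
proof -
  have pp: "permutation p" using p unfolding perms_def permutation_permutes by blast
  have pi: "p ` {..<n} = {..<n}" using p unfolding perms_def by (simp add: permutes_image)
  define X where "X = orbit p ` {..<n}"
  have fX: "finite X" unfolding X_def by simp
  have sub: "A \<subseteq> {..<n}" if "A \<in> X" for A
    using that orbit_sub[of p "{..<n}"] pi unfolding X_def by auto
  have fin: "finite A" if "A \<in> X" for A using sub[OF that] finite_subset by blast
  have "0 \<notin># ctype p {..<n}"
  proof
    assume "0 \<in># ctype p {..<n}"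
    then have "0 \<in> card ` X" unfolding ctype_def X_def by simp
    then obtain A where "A \<in> X" "card A = 0" by (metis imageE)
    moreover then have "A \<noteq> {}" unfolding X_def using orbit_nonempty by (metis imageE)
    ultimately show False using fin by auto
  qed
  moreover have "sum_mset (ctype p {..<n}) = n"
  proof -
    have "sum_mset (ctype p {..<n}) = sum card X" unfolding ctype_def X_def
      by (simp add: sum_unfold_sum_mset)
    also have "\<dots> = card (\<Union>X)"
    proof (rule card_Union_disjoint[symmetric])
      show "disjoint X" unfolding disjoint_def X_def
      proof (intro ballI impI)
        fix A B assume A: "A \<in> orbit p ` {..<n}" and B: "B \<in> orbit p ` {..<n}" and ne: "A \<noteq> B"
        show "A \<inter> B = {}"
        proof (rule ccontr)
          assume "A \<inter> B \<noteq> {}"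
          then obtain z where z: "z \<in> A" "z \<in> B" by blast
          obtain a b where "A = orbit p a" "B = orbit p b" using A B by blast
          then show False using orbit_same[OF pp] z ne by metis
        qed
      qed
      show "\<And>A. A \<in> X \<Longrightarrow> finite A" by (rule fin)
    qed
    also have "\<Union>X = {..<n}"
    proof
      show "\<Union>X \<subseteq> {..<n}" using sub by auto
      show "{..<n} \<subseteq> \<Union>X" unfolding X_def using permutation_self_in_orbit[OF pp] by auto
    qed
    finally show ?thesis by simp
  qed
  ultimately show ?thesis unfolding parts_def by simp
qed

lemma card_CP: "card (CP n) \<le> fact n * num_partitions n"
proof -
  define rep where "rep lam = (SOME r. r \<in> perms n \<and> ctype r {..<n} = lam)" for lam
  define cj where "cj p = (SOME \<rho>. \<rho> \<in> perms n \<and> \<rho> \<circ> rep (ctype p {..<n}) = p \<circ> \<rho>)" for p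
  have perm_of: "permutation p" if "p \<in> perms n" for p using that
    unfolding perms_def permutation_permutes by blast
  have rep: "rep (ctype p {..<n}) \<in> perms n \<and> ctype (rep (ctype p {..<n})) {..<n} = ctype p {..<n}"
    if "p \<in> perms n" for p
    unfolding rep_def by (rule someI[of _ p]) (use that in simp)
  have cj: "cj p \<in> perms n \<and> cj p \<circ> rep (ctype p {..<n}) = p \<circ> cj p" if p: "p \<in> perms n" for p
  proof -
    let ?r = "rep (ctype p {..<n})"
    have r: "?r \<in> perms n" "ctype ?r {..<n} = ctype p {..<n}" using rep[OF p] by auto
    have rp: "?r permutes {..<n}" "p permutes {..<n}" using r p by (auto simp: perms_def)
    have "\<exists>\<rho>. bij_betw \<rho> {..<n} {..<n} \<and> (\<forall>z\<in>{..<n}. \<rho> (?r z) = p (\<rho> z))"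
      by (rule conj_exists) (use r p perm_of perm_img[OF rp(1)] perm_img[OF rp(2)] in auto)
    then obtain \<rho> where \<rho>: "bij_betw \<rho> {..<n} {..<n}" "\<forall>z\<in>{..<n}. \<rho> (?r z) = p (\<rho> z)"
      by blast
    define \<rho>' where "\<rho>' z = (if z < n then \<rho> z else z)" for z
    have "bij_betw \<rho>' {..<n} {..<n}" using \<rho>(1)
      by (rule bij_betw_cong[THEN iffD1, rotated]) (simp add: \<rho>'_def)
    then have pr: "\<rho>' permutes {..<n}" by (rule bij_imp_permutes) (simp add: \<rho>'_def)
    have "\<rho>' \<circ> ?r = p \<circ> \<rho>'"
    proof
      fix z show "(\<rho>' \<circ> ?r) z = (p \<circ> \<rho>') z"
      proof (cases "z < n")
        case True
        then have "?r z < n" using rp(1) permutes_in_image by fastforce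
        then show ?thesis using True \<rho>(2) by (simp add: \<rho>'_def)
      next
        case False
        then have "?r z = z" "p z = z" using rp permutes_not_in by fastforce+
        then show ?thesis using False by (simp add: \<rho>'_def)
      qed
    qed
    then have "\<exists>\<rho>. \<rho> \<in> perms n \<and> \<rho> \<circ> ?r = p \<circ> \<rho>" using pr unfolding perms_def by blast
    then show ?thesis unfolding cj_def by (rule someI_ex)
  qed
  define \<Phi> where "\<Phi> (pq :: (nat \<Rightarrow> nat) \<times> (nat \<Rightarrow> nat)) = (ctype (fst pq) {..<n}, snd pq \<circ> cj (fst pq))" for pq
  have "inj_on \<Phi> (CP n)"
  proof (rule inj_onI)
    fix a b assume a: "a \<in> CP n" and b: "b \<in> CP n" and e: "\<Phi> a = \<Phi> b"
    obtain p q where a': "a = (p, q)" by (cases a)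
    obtain p' q' where b': "b = (p', q')" by (cases b)
    have pq: "p \<in> perms n" "q \<in> perms n" "p \<circ> q = q \<circ> p" using a a' by (auto simp: CP_def)
    have pq': "p' \<in> perms n" "q' \<in> perms n" "p' \<circ> q' = q' \<circ> p'" using b b' by (auto simp: CP_def)
    have ct: "ctype p {..<n} = ctype p' {..<n}" and mu: "q \<circ> cj p = q' \<circ> cj p'"
      using e a' b' by (auto simp: \<Phi>_def)
    let ?r = "rep (ctype p {..<n})"
    define \<mu> where "\<mu> = q \<circ> cj p"
    have "p \<circ> \<mu> = \<mu> \<circ> ?r"
    proof -
      have "p \<circ> \<mu> = (p \<circ> q) \<circ> cj p" by (simp add: \<mu>_def comp_assoc)
      also have "\<dots> = q \<circ> (p \<circ> cj p)" using pq(3) by (simp add: comp_assoc)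
      also have "\<dots> = q \<circ> (cj p \<circ> ?r)" using cj[OF pq(1)] by simp
      finally show ?thesis by (simp add: \<mu>_def comp_assoc)
    qed
    moreover have "p' \<circ> \<mu> = \<mu> \<circ> ?r"
    proof -
      have "p' \<circ> \<mu> = (p' \<circ> q') \<circ> cj p'" by (simp add: \<mu>_def mu comp_assoc)
      also have "\<dots> = q' \<circ> (p' \<circ> cj p')" using pq'(3) by (simp add: comp_assoc)
      also have "\<dots> = q' \<circ> (cj p' \<circ> rep (ctype p' {..<n}))" using cj[OF pq'(1)] by simp
      finally show ?thesis by (simp add: \<mu>_def mu comp_assoc ct)
    qed
    ultimately have pmu: "p \<circ> \<mu> = p' \<circ> \<mu>" by simp
    have s1: "surj q" using pq(2) unfolding perms_def by (simp add: permutes_surj)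
    have s2: "surj (cj p)" using cj[OF pq(1)] unfolding perms_def using permutes_surj by blast
    have "surj \<mu>" unfolding \<mu>_def using s1 s2 using comp_surj by blast
    have "p = p'"
    proof
      fix z obtain w where "z = \<mu> w" using \<open>surj \<mu>\<close> by (metis surjD)
      then show "p z = p' z" using pmu by (metis comp_apply)
    qed
    moreover have "q = q'"
    proof
      fix z obtain w where "z = cj p w" using s2 by (metis surjD)
      then show "q z = q' z" using mu \<open>p = p'\<close> by (metis comp_apply)
    qed
    ultimately show "a = b" using a' b' by simp
  qed
  moreover have "\<Phi> ` CP n \<subseteq> parts n \<times> perms n"
  proof
    fix z assume "z \<in> \<Phi> ` CP n"
    then obtain p q where z: "z = \<Phi> (p, q)" and pq: "(p, q) \<in> CP n" by auto
    have "p \<in> perms n" "q \<in> perms n" using pq by (auto simp: CP_def)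
    then have "q \<circ> cj p \<in> perms n" using cj[of p] unfolding perms_def
      by (simp add: permutes_compose)
    then show "z \<in> parts n \<times> perms n" using z ctype_parts[OF \<open>p \<in> perms n\<close>] by (simp add: \<Phi>_def)
  qed
  moreover have "finite (parts n \<times> perms n)" using finite_parts finite_perms by simp
  ultimately have "card (CP n) \<le> card (parts n \<times> perms n)"
    by (simp add: card_inj_on_le)
  also have "\<dots> = num_partitions n * fact n" by (simp add: card_cartesian_product card_parts card_perms)
  finally show ?thesis by (simp add: mult.commute)
qed


lemma hall:
  fixes N :: "'x \<Rightarrow> 'y set"
  assumes "finite X" "\<forall>x\<in>X. finite (N x)" "\<forall>S\<subseteq>X. card S \<le> card (\<Union>(N ` S))"
  shows "\<exists>f. inj_on f X \<and> (\<forall>x\<in>X. f x \<in> N x)"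
  using assms
proof (induction "card X" arbitrary: X N rule: less_induct)
  case less
  have finU: "finite (\<Union>(N ` S))" if "S \<subseteq> X" for S
  proof -
    have "finite S" using that less(2) finite_subset by blast
    then show ?thesis using that less(3) by auto
  qed
  show ?case
  proof (cases "X = {}")
    case True then show ?thesis by auto
  next
    case Xne: False
    show ?thesis
    proof (cases "\<exists>S. S \<subseteq> X \<and> S \<noteq> {} \<and> S \<noteq> X \<and> card (\<Union>(N ` S)) = card S")
      case True
      then obtain S where S: "S \<subseteq> X" "S \<noteq> {}" "S \<noteq> X" "card (\<Union>(N ` S)) = card S" by blast
      have fS: "finite S" using S(1) less(2) finite_subset by blast
      have c1: "card S < card X" using S(1,3) less(2) by (simp add: psubset_card_mono)
      have "\<exists>f. inj_on f S \<and> (\<forall>x\<in>S. f x \<in> N x)"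
        by (rule less(1)[OF c1]) (use fS less(3,4) S(1) in auto)
      then obtain f1 where f1: "inj_on f1 S" "\<forall>x\<in>S. f1 x \<in> N x" by blast
      define NS where "NS = \<Union>(N ` S)"
      define N2 where "N2 x = N x - NS" for x
      have "card S > 0" using fS S(2) by (simp add: card_gt_0_iff)
      moreover have "card (X - S) = card X - card S" by (rule card_Diff_subset[OF fS S(1)])
      moreover have "card S \<le> card X" using S(1) less(2) by (simp add: card_mono)
      ultimately have c2: "card (X - S) < card X" by linarith
      have hall2: "\<forall>T\<subseteq>X - S. card T \<le> card (\<Union>(N2 ` T))"
      proof (intro allI impI)
        fix T assume T: "T \<subseteq> X - S"
        have e: "\<Union>(N2 ` T) = \<Union>(N ` (T \<union> S)) - NS" by (auto simp: N2_def NS_def)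
        have TS: "T \<union> S \<subseteq> X" using T S(1) by auto
        have fin: "finite (\<Union>(N ` (T \<union> S)))" using finU[OF TS] .
        have sub: "NS \<subseteq> \<Union>(N ` (T \<union> S))" by (auto simp: NS_def)
        have "card (\<Union>(N2 ` T)) = card (\<Union>(N ` (T \<union> S))) - card NS"
          unfolding e using fin sub by (simp add: card_Diff_subset finite_subset)
        moreover have "card (T \<union> S) \<le> card (\<Union>(N ` (T \<union> S)))" using less(4) TS by blast
        moreover have "card (T \<union> S) = card T + card S"
        proof (rule card_Un_disjoint)
          show "finite T" using T less(2) finite_subset by blast
          show "finite S" by (rule fS)
          show "T \<inter> S = {}" using T by auto
        qed
        moreover have "card NS = card S" using S(4) by (simp add: NS_def)
        ultimately show "card T \<le> card (\<Union>(N2 ` T))" by simp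
      qed
      have "\<exists>f. inj_on f (X - S) \<and> (\<forall>x\<in>X - S. f x \<in> N2 x)"
        by (rule less(1)[OF c2]) (use less(2,3) hall2 in \<open>auto simp: N2_def\<close>)
      then obtain f2 where f2: "inj_on f2 (X - S)" "\<forall>x\<in>X - S. f2 x \<in> N2 x" by blast
      define f where "f x = (if x \<in> S then f1 x else f2 x)" for x
      have i1: "inj_on f S" using f1(1) by (simp add: inj_on_def f_def)
      have i2: "inj_on f (X - S)" using f2(1) by (simp add: inj_on_def f_def)
      have d: "f ` (S - (X - S)) \<inter> f ` ((X - S) - S) = {}"
        using f1(2) f2(2) by (auto simp: f_def N2_def NS_def)
      have "inj_on f (S \<union> (X - S))" unfolding inj_on_Un using i1 i2 d by blast
      moreover have "S \<union> (X - S) = X" using S(1) by auto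
      moreover have "\<forall>x\<in>X. f x \<in> N x" using f1(2) f2(2) by (auto simp: f_def N2_def)
      ultimately show ?thesis by metis
    next
      case False
      have strict: "card S < card (\<Union>(N ` S))" if "S \<subseteq> X" "S \<noteq> {}" "S \<noteq> X" for S
      proof -
        have "card S \<le> card (\<Union>(N ` S))" using less(4) that(1) by blast
        moreover have "card (\<Union>(N ` S)) \<noteq> card S" using False that by blast
        ultimately show ?thesis by linarith
      qed
      obtain x where x: "x \<in> X" using Xne by auto
      have "card {x} \<le> card (\<Union>(N ` {x}))" using less(4) x by blast
      then have "N x \<noteq> {}" by auto
      then obtain y where y: "y \<in> N x" by auto
      define N2 where "N2 z = N z - {y}" for z
      have c2: "card (X - {x}) < card X" using x less(2) by (meson card_Diff1_less)
      have hall2: "\<forall>T\<subseteq>X - {x}. card T \<le> card (\<Union>(N2 ` T))"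
      proof (intro allI impI)
        fix T assume T: "T \<subseteq> X - {x}"
        show "card T \<le> card (\<Union>(N2 ` T))"
        proof (cases "T = {}")
          case True then show ?thesis by simp
        next
          case False
          have TX: "T \<subseteq> X" "T \<noteq> X" using T x by auto
          have lt: "card T < card (\<Union>(N ` T))" using strict[OF TX(1) False TX(2)] .
          have e: "\<Union>(N2 ` T) = \<Union>(N ` T) - {y}" by (auto simp: N2_def)
          have "card (\<Union>(N ` T) - {y}) \<ge> card (\<Union>(N ` T)) - 1"
            by (simp add: card_Diff_singleton_if)
          then show ?thesis unfolding e using lt by linarith
        qed
      qed
      have "\<exists>f. inj_on f (X - {x}) \<and> (\<forall>z\<in>X - {x}. f z \<in> N2 z)"
        by (rule less(1)[OF c2]) (use less(2,3) hall2 in \<open>auto simp: N2_def\<close>)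
      then obtain f2 where f2: "inj_on f2 (X - {x})" "\<forall>z\<in>X - {x}. f2 z \<in> N2 z" by blast
      define f where "f z = (if z = x then y else f2 z)" for z
      have "inj_on f (insert x (X - {x}))"
      proof (subst inj_on_insert, intro conjI)
        show "inj_on f (X - {x})" using f2(1) by (simp add: inj_on_def f_def)
        show "f x \<notin> f ` (X - {x} - {x})" using f2(2) by (auto simp: f_def N2_def)
      qed
      moreover have "insert x (X - {x}) = X" using x by auto
      moreover have "\<forall>z\<in>X. f z \<in> N z" using f2(2) y by (auto simp: f_def N2_def)
      ultimately show ?thesis by metis
    qed
  qed
qed


definition Tup :: "'a set \<Rightarrow> ('a \<Rightarrow> 'a \<Rightarrow> bool) \<Rightarrow> nat \<Rightarrow> ('a \<Rightarrow> nat \<Rightarrow> nat) set" where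
  "Tup V E n = {T \<in> PiE V (\<lambda>_. perms n). \<forall>u w. E u w \<longrightarrow> T u \<circ> T w = T w \<circ> T u}"

lemma finite_CP: "finite (CP n)"
proof -
  have "CP n \<subseteq> perms n \<times> perms n" by (auto simp: CP_def)
  then show ?thesis using finite_perms finite_subset by blast
qed

lemma indep_facts:
  assumes "simple_graph V E"
  shows "\<exists>I. independent_set V E I \<and> card I = independence_number V E"
    "independent_set V E J \<Longrightarrow> card J \<le> independence_number V E"
proof -
  have fV: "finite V" using assms by (simp add: simple_graph_def)
  define IS where "IS = {card S | S. independent_set V E S}"
  have "IS \<subseteq> card ` Pow V" by (auto simp: IS_def independent_set_def)
  then have fIS: "finite IS" using fV finite_subset by blast
  have "independent_set V E {}" by (simp add: independent_set_def)
  then have neIS: "IS \<noteq> {}" by (auto simp: IS_def)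
  have "Max IS \<in> IS" using Max_in[OF fIS neIS] .
  then show "\<exists>I. independent_set V E I \<and> card I = independence_number V E"
    by (auto simp: IS_def independence_number_def)
  show "independent_set V E J \<Longrightarrow> card J \<le> independence_number V E"
    unfolding independence_number_def using fIS by (auto simp: IS_def intro!: Max_ge)
qed

lemma card_Tup:
  assumes G: "simple_graph V E" and bp: "bipartite V E"
  shows "finite (Tup V E n) \<and> card (Tup V E n) \<le> card (CP n) ^ independence_number V E"
proof -
  have fV: "finite V" using G by (simp add: simple_graph_def)
  have inV: "E v w \<Longrightarrow> v \<in> V \<and> w \<in> V" for v w using G by (simp add: simple_graph_def)
  have sym: "E v w \<Longrightarrow> E w v" for v w using G by (simp add: simple_graph_def)
  obtain I where I: "independent_set V E I" "card I = independence_number V E"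
    using indep_facts(1)[OF G] by blast
  have IV: "I \<subseteq> V" using I(1) by (simp add: independent_set_def)
  have fI: "finite I" using IV fV finite_subset by blast
  obtain A B where AB: "A \<union> B = V" "A \<inter> B = {}"
    "\<forall>v w. E v w \<longrightarrow> (v \<in> A \<and> w \<in> B) \<or> (v \<in> B \<and> w \<in> A)"
    using bp unfolding bipartite_def by blast
  define C where "C = V - I"
  define N where "N c = {i \<in> I. E c i}" for c
  have key: "card S \<le> card (\<Union>(N ` S))" if S: "S \<subseteq> C" "independent_set V E S" for S
  proof -
    define NS where "NS = \<Union>(N ` S)"
    have NSI: "NS \<subseteq> I" by (auto simp: NS_def N_def)
    define J where "J = (I - NS) \<union> S"
    have "independent_set V E J"
      unfolding independent_set_def J_def
    proof (intro conjI ballI)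
      show "I - NS \<union> S \<subseteq> V" using IV S(1) by (auto simp: C_def)
    next
      fix v w assume v: "v \<in> I - NS \<union> S" and w: "w \<in> I - NS \<union> S"
      show "\<not> E v w"
      proof
        assume e: "E v w"
        show False
        proof (cases "v \<in> S")
          case vS: True
          show False
          proof (cases "w \<in> S")
            case True then show False using S(2) vS e by (auto simp: independent_set_def)
          next
            case False
            then have "w \<in> I" "w \<notin> NS" using w by auto
            then show False using e vS by (auto simp: NS_def N_def)
          qed
        next
          case vS: False
          then have vI: "v \<in> I" "v \<notin> NS" using v by auto
          show False
          proof (cases "w \<in> S")
            case True then show False using vI e sym by (auto simp: NS_def N_def)
          next
            case False
            then have "w \<in> I" using w by auto
            then show False using vI I(1) e by (auto simp: independent_set_def)
          qed
        qed
      qed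
    qed
    then have "card J \<le> card I" using indep_facts(2)[OF G] I(2) by simp
    moreover have "card J = card (I - NS) + card S"
      unfolding J_def
    proof (rule card_Un_disjoint)
      show "finite (I - NS)" using fI by simp
      show "finite S" using S(1) fV finite_subset by (auto simp: C_def)
      show "(I - NS) \<inter> S = {}" using S(1) by (auto simp: C_def)
    qed
    moreover have "card (I - NS) = card I - card NS" using NSI fI by (simp add: card_Diff_subset finite_subset)
    moreover have "card NS \<le> card I" using NSI fI by (simp add: card_mono)
    ultimately show ?thesis unfolding NS_def by linarith
  qed
  have indA: "independent_set V E (S \<inter> A)" if "S \<subseteq> C" for S
    using that AB(1,2) AB(3)[rule_format] unfolding independent_set_def C_def by blast
  have indB: "independent_set V E (S \<inter> B)" if "S \<subseteq> C" for S
    using that AB(1,2) AB(3)[rule_format] unfolding independent_set_def C_def by blast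
  have hallc: "\<forall>S\<subseteq>C. card S \<le> card (\<Union>(N ` S))"
  proof (intro allI impI)
    fix S assume S: "S \<subseteq> C"
    have fS: "finite S" using S fV finite_subset by (auto simp: C_def)
    have fN: "finite (\<Union>(N ` S))" using fS fI by (auto simp: N_def)
    have "S = (S \<inter> A) \<union> (S \<inter> B)" using S AB(1) by (auto simp: C_def)
    then have cS: "card S = card (S \<inter> A) + card (S \<inter> B)"
      using fS AB(2) by (metis card_Un_disjoint finite_Int inf_commute inf_left_commute inf_bot_right Int_assoc)
    have U: "\<Union>(N ` S) = \<Union>(N ` (S \<inter> A)) \<union> \<Union>(N ` (S \<inter> B))"
      using \<open>S = (S \<inter> A) \<union> (S \<inter> B)\<close> by blast
    have NA: "\<Union>(N ` (S \<inter> A)) \<subseteq> B" using AB by (auto simp: N_def)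
    have NB: "\<Union>(N ` (S \<inter> B)) \<subseteq> A" using AB by (auto simp: N_def)
    have "card (\<Union>(N ` S)) = card (\<Union>(N ` (S \<inter> A))) + card (\<Union>(N ` (S \<inter> B)))"
      unfolding U
    proof (rule card_Un_disjoint)
      show "finite (\<Union>(N ` (S \<inter> A)))" using fN U by auto
      show "finite (\<Union>(N ` (S \<inter> B)))" using fN U by auto
      show "\<Union>(N ` (S \<inter> A)) \<inter> \<Union>(N ` (S \<inter> B)) = {}" using NA NB AB(2) by blast
    qed
    moreover have "card (S \<inter> A) \<le> card (\<Union>(N ` (S \<inter> A)))" using key[OF _ indA[OF S]] S by auto
    moreover have "card (S \<inter> B) \<le> card (\<Union>(N ` (S \<inter> B)))" using key[OF _ indB[OF S]] S by auto
    ultimately show "card S \<le> card (\<Union>(N ` S))" using cS by linarith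
  qed
  have fC: "finite C" using fV by (simp add: C_def)
  obtain m where m: "inj_on m C" "\<forall>c\<in>C. m c \<in> N c"
    using hall[OF fC _ hallc] fI by (auto simp: N_def)
  have mI: "m c \<in> I" "E c (m c)" if "c \<in> C" for c using m(2) that by (auto simp: N_def)
  define \<Phi> where "\<Phi> T = (\<lambda>i\<in>I. (T i, if i \<in> m ` C then T (the_inv_into C m i) else id))"
    for T :: "'a \<Rightarrow> nat \<Rightarrow> nat"
  have idp: "id \<in> perms n" by (simp add: perms_def permutes_id)
  have img: "\<Phi> ` Tup V E n \<subseteq> PiE I (\<lambda>_. CP n)"
  proof
    fix z assume "z \<in> \<Phi> ` Tup V E n"
    then obtain T where z: "z = \<Phi> T" and T: "T \<in> Tup V E n" by auto
    have Tp: "T v \<in> perms n" if "v \<in> V" for v using T that by (auto simp: Tup_def)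
    have Tc: "T u \<circ> T w = T w \<circ> T u" if "E u w" for u w using T that by (auto simp: Tup_def)
    have "(T i, if i \<in> m ` C then T (the_inv_into C m i) else id) \<in> CP n" if i: "i \<in> I" for i
    proof (cases "i \<in> m ` C")
      case True
      then obtain c where c: "c \<in> C" "i = m c" by auto
      then have "the_inv_into C m i = c" using m(1) by (simp add: the_inv_into_f_f)
      moreover have "T i \<circ> T c = T c \<circ> T i" using Tc[OF mI(2)[OF c(1)]] c by simp
      moreover have "c \<in> V" using c by (simp add: C_def)
      ultimately show ?thesis using True Tp i IV by (auto simp: CP_def)
    next
      case False
      then show ?thesis using Tp i IV idp by (auto simp: CP_def)
    qed
    then show "z \<in> PiE I (\<lambda>_. CP n)" unfolding z \<Phi>_def by auto
  qed
  have inj: "inj_on \<Phi> (Tup V E n)"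
  proof (rule inj_onI)
    fix T T' assume T: "T \<in> Tup V E n" and T': "T' \<in> Tup V E n" and e: "\<Phi> T = \<Phi> T'"
    have "T \<in> PiE V (\<lambda>_. perms n)" "T' \<in> PiE V (\<lambda>_. perms n)" using T T' by (auto simp: Tup_def)
    then show "T = T'"
    proof (rule PiE_ext)
      fix v assume v: "v \<in> V"
      show "T v = T' v"
      proof (cases "v \<in> I")
        case True
        then have "\<Phi> T v = \<Phi> T' v" using e by simp
        then show ?thesis using True by (simp add: \<Phi>_def)
      next
        case False
        then have c: "v \<in> C" using v by (simp add: C_def)
        have "\<Phi> T (m v) = \<Phi> T' (m v)" using e by simp
        moreover have "the_inv_into C m (m v) = v" using m(1) c by (simp add: the_inv_into_f_f)
        ultimately show ?thesis using mI(1)[OF c] c by (simp add: \<Phi>_def)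
      qed
    qed
  qed
  have fT: "finite (Tup V E n)"
  proof -
    have "Tup V E n \<subseteq> PiE V (\<lambda>_. perms n)" by (auto simp: Tup_def)
    moreover have "finite (PiE V (\<lambda>_. perms n))" using fV finite_perms by (simp add: finite_PiE)
    ultimately show ?thesis using finite_subset by blast
  qed
  have "card (Tup V E n) \<le> card (PiE I (\<lambda>_. CP n))"
    using card_inj_on_le[OF inj img] fI finite_CP by (simp add: finite_PiE)
  also have "\<dots> = card (CP n) ^ card I" using fI by (simp add: card_PiE)
  finally show ?thesis using fT I(2) by simp
qed


definition stepr :: "'a set \<Rightarrow> ('a \<Rightarrow> 'a \<Rightarrow> bool) \<Rightarrow> ('a letter list \<times> 'a letter list) set" where
  "stepr V E = {(a, b). raag_step V E a b} \<union> {(a, b). raag_step V E b a}"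

lemma raag_rel_alt: "raag_rel V E = {(x, y). x \<in> raag_words V \<and> y \<in> raag_words V \<and> (x, y) \<in> (stepr V E)\<^sup>*}"
  by (simp add: raag_rel_def stepr_def)

lemma raag_equiv: "equiv (raag_words V) (raag_rel V E)"
proof (rule equivI)
  show "raag_rel V E \<subseteq> raag_words V \<times> raag_words V" by (auto simp: raag_rel_alt)
  show "refl_on (raag_words V) (raag_rel V E)" by (auto simp: raag_rel_alt refl_on_def)
  have "sym (stepr V E)" by (auto simp: stepr_def sym_def)
  then have s: "sym ((stepr V E)\<^sup>*)" by (rule sym_rtrancl)
  then show "sym (raag_rel V E)" unfolding raag_rel_alt sym_def by blast
  show "trans (raag_rel V E)" unfolding raag_rel_alt trans_def
    by (auto intro: rtrancl_trans)
qed

lemma step_cong: "raag_step V E a b \<Longrightarrow> raag_step V E (u @ a @ v) (u @ b @ v)"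
proof (induction rule: raag_step.induct)
  case (cancel w xs b ys)
  have "raag_step V E ((u @ xs) @ [(w, b), (w, \<not> b)] @ (ys @ v)) ((u @ xs) @ (ys @ v))"
    by (rule raag_step.cancel[OF cancel])
  then show ?case by simp
next
  case (commute x w xs b c ys)
  have "raag_step V E ((u @ xs) @ [(x, b), (w, c)] @ (ys @ v)) ((u @ xs) @ [(w, c), (x, b)] @ (ys @ v))"
    using commute by (rule raag_step.commute)
  then show ?case by simp
qed

lemma stepr_cong: "(a, b) \<in> (stepr V E)\<^sup>* \<Longrightarrow> (u @ a @ v, u @ b @ v) \<in> (stepr V E)\<^sup>*"
proof (induction rule: rtrancl_induct)
  case base then show ?case by simp
next
  case (step y z)
  then have "(u @ y @ v, u @ z @ v) \<in> stepr V E" by (auto simp: stepr_def intro: step_cong)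
  then show ?case using step by (meson rtrancl.rtrancl_into_rtrancl)
qed

lemma rel_cong:
  assumes "(x, y) \<in> raag_rel V E" "u \<in> raag_words V" "v \<in> raag_words V"
  shows "(u @ x @ v, u @ y @ v) \<in> raag_rel V E"
  using assms stepr_cong[of x y V E u v] by (auto simp: raag_rel_alt raag_words_def)

definition cls :: "'a set \<Rightarrow> ('a \<Rightarrow> 'a \<Rightarrow> bool) \<Rightarrow> 'a letter list \<Rightarrow> 'a letter list set" where
  "cls V E w = raag_rel V E `` {w}"

lemma carrier_raag: "carrier (RAAG V E) = {cls V E w | w. w \<in> raag_words V}"
  by (auto simp: RAAG_def cls_def quotient_def)

lemma cls_in: "w \<in> raag_words V \<Longrightarrow> cls V E w \<in> carrier (RAAG V E)"
  by (auto simp: carrier_raag)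

lemma cls_mult:
  assumes x: "x \<in> raag_words V" and y: "y \<in> raag_words V"
  shows "cls V E x \<otimes>\<^bsub>RAAG V E\<^esub> cls V E y = cls V E (x @ y)"
proof -
  let ?R = "raag_rel V E"
  have eq: "?R `` {x' @ y'} = ?R `` {x @ y}" if "x' \<in> ?R `` {x}" "y' \<in> ?R `` {y}" for x' y'
  proof -
    have "(x, x') \<in> ?R" "(y, y') \<in> ?R" using that by auto
    then have x'w: "x' \<in> raag_words V" "y' \<in> raag_words V" by (auto simp: raag_rel_alt)
    have "([] @ x @ y, [] @ x' @ y) \<in> ?R" using rel_cong[OF \<open>(x, x') \<in> ?R\<close>, of "[]" y] y
      by (simp add: raag_words_def)
    moreover have "(x' @ y @ [], x' @ y' @ []) \<in> ?R" using rel_cong[OF \<open>(y, y') \<in> ?R\<close>, of x' "[]"] x'w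
      by (simp add: raag_words_def)
    moreover have tr: "trans ?R" using raag_equiv[of V E] unfolding equiv_def by blast
    ultimately have "(x @ y, x' @ y') \<in> ?R" by (simp add: transD[OF tr])
    then show ?thesis by (rule equiv_class_eq[OF raag_equiv, symmetric])
  qed
  have xin: "x \<in> ?R `` {x}" "y \<in> ?R `` {y}"
    using equiv_class_self[OF raag_equiv] x y by auto
  have "{?R `` {x' @ y'} | x' y'. x' \<in> ?R `` {x} \<and> y' \<in> ?R `` {y}} = {?R `` {x @ y}}"
    using eq xin by blast
  then show ?thesis unfolding RAAG_def cls_def by simp
qed

definition invw :: "'a letter list \<Rightarrow> 'a letter list" where
  "invw w = rev (map (\<lambda>(v, b). (v, \<not> b)) w)"

lemma invw_words: "w \<in> raag_words V \<Longrightarrow> invw w \<in> raag_words V"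
  by (auto simp: invw_def raag_words_def)

lemma invw_rel: "w \<in> raag_words V \<Longrightarrow> (invw w @ w, []) \<in> raag_rel V E"
proof (induction w)
  case Nil then show ?case using raag_equiv[of V E] by (auto simp: invw_def raag_words_def intro: equiv_class_self
      simp: equiv_def refl_on_def)
next
  case (Cons a w)
  obtain v b where a: "a = (v, b)" by (cases a)
  have vV: "v \<in> V" and ww: "w \<in> raag_words V" using Cons(2) a by (auto simp: raag_words_def)
  have IH: "(invw w @ w, []) \<in> raag_rel V E" using Cons(1) ww .
  have "invw (a # w) @ a # w = invw w @ [(v, \<not> b), (v, \<not> \<not> b)] @ w" by (simp add: invw_def a)
  moreover have "raag_step V E (invw w @ [(v, \<not> b), (v, \<not> \<not> b)] @ w) (invw w @ w)"
    by (rule raag_step.cancel[OF vV])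
  ultimately have "(invw (a # w) @ a # w, invw w @ w) \<in> raag_rel V E"
    using invw_words[OF Cons(2)] Cons(2) invw_words[OF ww] ww
    by (auto simp: raag_rel_alt stepr_def raag_words_def)
  then show ?case using IH raag_equiv[of V E] unfolding equiv_def trans_def by blast
qed

lemma raag_group: "group (RAAG V E)"
proof (rule groupI)
  fix x y assume "x \<in> carrier (RAAG V E)" "y \<in> carrier (RAAG V E)"
  then obtain a b where "x = cls V E a" "y = cls V E b" "a \<in> raag_words V" "b \<in> raag_words V"
    by (auto simp: carrier_raag)
  then show "x \<otimes>\<^bsub>RAAG V E\<^esub> y \<in> carrier (RAAG V E)"
    by (simp add: cls_mult cls_in raag_words_def)
next
  show "\<one>\<^bsub>RAAG V E\<^esub> \<in> carrier (RAAG V E)"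
    using cls_in[of "[]" V E] by (simp add: RAAG_def cls_def raag_words_def)
next
  fix x y z assume "x \<in> carrier (RAAG V E)" "y \<in> carrier (RAAG V E)" "z \<in> carrier (RAAG V E)"
  then obtain a b c where "x = cls V E a" "y = cls V E b" "z = cls V E c"
    "a \<in> raag_words V" "b \<in> raag_words V" "c \<in> raag_words V"
    by (auto simp: carrier_raag)
  then show "x \<otimes>\<^bsub>RAAG V E\<^esub> y \<otimes>\<^bsub>RAAG V E\<^esub> z = x \<otimes>\<^bsub>RAAG V E\<^esub> (y \<otimes>\<^bsub>RAAG V E\<^esub> z)"
    by (simp add: cls_mult raag_words_def)
next
  fix x assume "x \<in> carrier (RAAG V E)"
  then obtain a where "x = cls V E a" "a \<in> raag_words V" by (auto simp: carrier_raag)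
  moreover have "\<one>\<^bsub>RAAG V E\<^esub> = cls V E []" by (simp add: RAAG_def cls_def)
  ultimately show "\<one>\<^bsub>RAAG V E\<^esub> \<otimes>\<^bsub>RAAG V E\<^esub> x = x"
    by (simp add: cls_mult raag_words_def)
next
  fix x assume "x \<in> carrier (RAAG V E)"
  then obtain a where x: "x = cls V E a" "a \<in> raag_words V" by (auto simp: carrier_raag)
  have "cls V E (invw a) \<otimes>\<^bsub>RAAG V E\<^esub> x = cls V E (invw a @ a)"
    using cls_mult[OF invw_words[OF x(2)] x(2)] x(1) by simp
  also have "\<dots> = cls V E []" unfolding cls_def
    using invw_rel[OF x(2)] raag_equiv[of V E] by (rule equiv_class_eq[rotated])
  also have "\<dots> = \<one>\<^bsub>RAAG V E\<^esub>" by (simp add: RAAG_def cls_def)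
  finally show "\<exists>y\<in>carrier (RAAG V E). y \<otimes>\<^bsub>RAAG V E\<^esub> x = \<one>\<^bsub>RAAG V E\<^esub>"
    using cls_in[OF invw_words[OF x(2)]] by blast
qed


definition actg :: "('g, 'm) monoid_scheme \<Rightarrow> 'g set \<Rightarrow> nat \<Rightarrow> ('g set \<Rightarrow> nat) \<Rightarrow> 'g \<Rightarrow> nat \<Rightarrow> nat" where
  "actg G H n b g = (\<lambda>i. if i < n then b (the_inv_into (rcosets\<^bsub>G\<^esub> H) b i #>\<^bsub>G\<^esub> g) else i)"

context group
begin

lemma rcos_act_closed:
  assumes "subgroup H G" "C \<in> rcosets H" "g \<in> carrier G"
  shows "C #> g \<in> rcosets H"
proof -
  obtain a where a: "a \<in> carrier G" "C = H #> a" using assms(2) unfolding RCOSETS_def by auto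
  have "C #> g = H #> (a \<otimes> g)" using a assms(1,3) by (simp add: coset_mult_assoc subgroup.subset)
  then show ?thesis using a assms by (simp add: rcosetsI subgroup.subset)
qed

lemma rcos_act_inv:
  assumes "subgroup H G" "C \<in> rcosets H" "g \<in> carrier G"
  shows "C #> g #> inv g = C"
proof -
  have "C \<subseteq> carrier G" using subgroup.rcosets_carrier[OF assms(1) is_group assms(2)] .
  then show ?thesis using assms(3) by (simp add: coset_mult_assoc)
qed

lemma act_facts:
  assumes H: "subgroup H G" and b: "bij_betw b (rcosets H) {..<n}" and g: "g \<in> carrier G"
  shows "actg G H n b g \<in> perms n"
    "\<And>C. C \<in> rcosets H \<Longrightarrow> actg G H n b g (b C) = b (C #> g)"
    "\<And>C. C \<in> rcosets H \<Longrightarrow> inv_into UNIV (actg G H n b g) (b C) = b (C #> inv g)"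
proof -
  have bi: "bij_betw (the_inv_into (rcosets H) b) {..<n} (rcosets H)" using b by (rule bij_betw_the_inv_into)
  have ph: "bij_betw (\<lambda>C. C #> g) (rcosets H) (rcosets H)"
  proof (rule bij_betwI[where g = "\<lambda>C. C #> inv g"])
    show "(\<lambda>C. C #> g) \<in> rcosets H \<rightarrow> rcosets H" using rcos_act_closed[OF H _ g] by auto
    show "(\<lambda>C. C #> inv g) \<in> rcosets H \<rightarrow> rcosets H" using rcos_act_closed[OF H _ inv_closed[OF g]] by auto
    show "\<And>C. C \<in> rcosets H \<Longrightarrow> C #> g #> inv g = C" using rcos_act_inv[OF H _ g] by simp
    show "\<And>C. C \<in> rcosets H \<Longrightarrow> C #> inv g #> g = C" using rcos_act_inv[OF H _ inv_closed[OF g]] g by simp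
  qed
  have "bij_betw (b \<circ> (\<lambda>C. C #> g) \<circ> the_inv_into (rcosets H) b) {..<n} {..<n}"
    using bij_betw_trans[OF bij_betw_trans[OF bi ph] b] by (simp add: comp_assoc)
  then have "bij_betw (actg G H n b g) {..<n} {..<n}"
    by (rule bij_betw_cong[THEN iffD1, rotated]) (simp add: actg_def)
  then have pm: "actg G H n b g permutes {..<n}" by (rule bij_imp_permutes) (simp add: actg_def)
  then show "actg G H n b g \<in> perms n" by (simp add: perms_def)
  have ab: "actg G H n b g (b C) = b (C #> g)" if C: "C \<in> rcosets H" for C
  proof -
    have "b C < n" using b C by (auto simp: bij_betw_def)
    moreover have "the_inv_into (rcosets H) b (b C) = C" using b C by (simp add: bij_betw_def the_inv_into_f_f)
    ultimately show ?thesis by (simp add: actg_def)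
  qed
  then show "\<And>C. C \<in> rcosets H \<Longrightarrow> actg G H n b g (b C) = b (C #> g)" by blast
  fix C assume C: "C \<in> rcosets H"
  have C': "C #> inv g \<in> rcosets H" using rcos_act_closed[OF H C inv_closed[OF g]] .
  have "actg G H n b g (b (C #> inv g)) = b C"
    using ab[OF C'] rcos_act_inv[OF H C inv_closed[OF g]] g by simp
  then show "inv_into UNIV (actg G H n b g) (b C) = b (C #> inv g)"
    using permutes_inverses(2)[OF pm] by metis
qed

end


context group
begin
lemma act_mult:
  assumes H: "subgroup H G" and b: "bij_betw b (rcosets H) {..<n}" and g: "g \<in> carrier G" and h: "h \<in> carrier G"
  shows "actg G H n b (g \<otimes> h) = actg G H n b h \<circ> actg G H n b g"
proof
  fix i show "actg G H n b (g \<otimes> h) i = (actg G H n b h \<circ> actg G H n b g) i"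
  proof (cases "i < n")
    case True
    define C where "C = the_inv_into (rcosets H) b i"
    have C: "C \<in> rcosets H" "b C = i" unfolding C_def using b True
      by (auto simp: bij_betw_def the_inv_into_into f_the_inv_into_f)
    have Cg: "C #> g \<in> rcosets H" using rcos_act_closed[OF H C(1) g] .
    have Csub: "C \<subseteq> carrier G" using subgroup.rcosets_carrier[OF H is_group C(1)] .
    have "(actg G H n b h \<circ> actg G H n b g) i = b (C #> g #> h)"
      using act_facts(2)[OF H b g C(1)] act_facts(2)[OF H b h Cg] C(2) by simp
    also have "\<dots> = b (C #> (g \<otimes> h))" using Csub g h by (simp add: coset_mult_assoc)
    also have "\<dots> = actg G H n b (g \<otimes> h) i" using act_facts(2)[OF H b m_closed[OF g h] C(1)] C(2) by simp
    finally show ?thesis by simp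
  next
    case False then show ?thesis by (simp add: actg_def)
  qed
qed
end

definition gen :: "'a set \<Rightarrow> ('a \<Rightarrow> 'a \<Rightarrow> bool) \<Rightarrow> 'a \<Rightarrow> bool \<Rightarrow> 'a letter list set" where
  "gen V E v e = cls V E [(v, e)]"

lemma gen_carrier: "v \<in> V \<Longrightarrow> gen V E v e \<in> carrier (RAAG V E)"
  unfolding gen_def by (rule cls_in) (simp add: raag_words_def)

lemma cls_one: "cls V E [] = \<one>\<^bsub>RAAG V E\<^esub>" by (simp add: RAAG_def cls_def)

lemma cls_eqI: "raag_step V E x y \<Longrightarrow> x \<in> raag_words V \<Longrightarrow> y \<in> raag_words V \<Longrightarrow> cls V E x = cls V E y"
  unfolding cls_def
  by (rule equiv_class_eq[OF raag_equiv]) (auto simp: raag_rel_alt stepr_def)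

lemma gen_inv: "v \<in> V \<Longrightarrow> inv\<^bsub>RAAG V E\<^esub> (gen V E v True) = gen V E v False"
proof -
  assume v: "v \<in> V"
  interpret group "RAAG V E" by (rule raag_group)
  have "gen V E v False \<otimes>\<^bsub>RAAG V E\<^esub> gen V E v True = cls V E [(v, False), (v, True)]"
    unfolding gen_def using v by (simp add: cls_mult raag_words_def)
  also have "\<dots> = cls V E []"
    using cls_eqI[OF raag_step.cancel[where xs="[]" and b=False and ys="[]" and E=E, OF v]] v by (simp add: raag_words_def)
  also have "\<dots> = \<one>\<^bsub>RAAG V E\<^esub>" by (rule cls_one)
  finally have "gen V E v False \<otimes>\<^bsub>RAAG V E\<^esub> gen V E v True = \<one>\<^bsub>RAAG V E\<^esub>" .
  then show ?thesis by (rule inv_equality[OF _ gen_carrier[OF v] gen_carrier[OF v]])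
qed

lemma gen_comm:
  assumes G: "simple_graph V E" and e: "E u w"
  shows "gen V E u True \<otimes>\<^bsub>RAAG V E\<^esub> gen V E w True = gen V E w True \<otimes>\<^bsub>RAAG V E\<^esub> gen V E u True"
proof -
  have uw: "u \<in> V" "w \<in> V" using G e by (auto simp: simple_graph_def)
  have "gen V E u True \<otimes>\<^bsub>RAAG V E\<^esub> gen V E w True = cls V E [(u, True), (w, True)]"
    unfolding gen_def using uw by (simp add: cls_mult raag_words_def)
  also have "\<dots> = cls V E [(w, True), (u, True)]"
    using cls_eqI[OF raag_step.commute[where xs="[]" and b=True and c=True and ys="[]" and V=V and E=E and v=u and w=w, OF e]] uw by (simp add: raag_words_def)
  also have "\<dots> = gen V E w True \<otimes>\<^bsub>RAAG V E\<^esub> gen V E u True"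
    unfolding gen_def using uw by (simp add: cls_mult raag_words_def)
  finally show ?thesis .
qed

definition tupH :: "'a set \<Rightarrow> ('a \<Rightarrow> 'a \<Rightarrow> bool) \<Rightarrow> nat \<Rightarrow> 'a letter list set set \<Rightarrow> ('a letter list set set \<Rightarrow> nat) \<Rightarrow> 'a \<Rightarrow> nat \<Rightarrow> nat" where
  "tupH V E n H b = (\<lambda>v\<in>V. actg (RAAG V E) H n b (gen V E v True))"

definition evalw :: "('a \<Rightarrow> nat \<Rightarrow> nat) \<Rightarrow> 'a letter list \<Rightarrow> nat" where
  "evalw T w = foldl (\<lambda>i l. if snd l then T (fst l) i else inv_into UNIV (T (fst l)) i) 0 w"

definition Bset :: "'a set \<Rightarrow> ('a \<Rightarrow> 'a \<Rightarrow> bool) \<Rightarrow> nat \<Rightarrow> 'a letter list set set \<Rightarrow> ('a letter list set set \<Rightarrow> nat) set" where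
  "Bset V E n H = {b \<in> extensional (rcosets\<^bsub>RAAG V E\<^esub> H). bij_betw b (rcosets\<^bsub>RAAG V E\<^esub> H) {..<n} \<and> b H = 0}"

lemma tupH_Tup:
  assumes G: "simple_graph V E" and H: "subgroup H (RAAG V E)" and b: "bij_betw b (rcosets\<^bsub>RAAG V E\<^esub> H) {..<n}"
  shows "tupH V E n H b \<in> Tup V E n"
proof -
  interpret group "RAAG V E" by (rule raag_group)
  have pv: "actg (RAAG V E) H n b (gen V E v True) \<in> perms n" if "v \<in> V" for v
    using act_facts(1)[OF H b gen_carrier[OF that]] .
  have cm: "actg (RAAG V E) H n b (gen V E u True) \<circ> actg (RAAG V E) H n b (gen V E w True)
      = actg (RAAG V E) H n b (gen V E w True) \<circ> actg (RAAG V E) H n b (gen V E u True)" if e: "E u w" for u w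
  proof -
    have uw: "u \<in> V" "w \<in> V" using G e by (auto simp: simple_graph_def)
    have m1: "actg (RAAG V E) H n b (gen V E u True \<otimes>\<^bsub>RAAG V E\<^esub> gen V E w True) =
      actg (RAAG V E) H n b (gen V E w True) \<circ> actg (RAAG V E) H n b (gen V E u True)"
      by (rule act_mult[OF H b gen_carrier[OF uw(1)] gen_carrier[OF uw(2)]])
    have m2: "actg (RAAG V E) H n b (gen V E w True \<otimes>\<^bsub>RAAG V E\<^esub> gen V E u True) =
      actg (RAAG V E) H n b (gen V E u True) \<circ> actg (RAAG V E) H n b (gen V E w True)"
      by (rule act_mult[OF H b gen_carrier[OF uw(2)] gen_carrier[OF uw(1)]])
    show ?thesis using m1 m2 gen_comm[OF G e] by simp
  qed
  have inV: "E u w \<Longrightarrow> u \<in> V \<and> w \<in> V" for u w using G by (auto simp: simple_graph_def)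
  have p1: "tupH V E n H b \<in> PiE V (\<lambda>_. perms n)"
    unfolding tupH_def using pv by (simp add: restrict_PiE_iff)
  have p2: "\<forall>u w. E u w \<longrightarrow> tupH V E n H b u \<circ> tupH V E n H b w = tupH V E n H b w \<circ> tupH V E n H b u"
  proof (intro allI impI)
    fix u w assume e: "E u w"
    have "tupH V E n H b u = actg (RAAG V E) H n b (gen V E u True)"
      "tupH V E n H b w = actg (RAAG V E) H n b (gen V E w True)"
      using inV[OF e] unfolding tupH_def by auto
    then show "tupH V E n H b u \<circ> tupH V E n H b w = tupH V E n H b w \<circ> tupH V E n H b u"
      using cm[OF e] by simp
  qed
  show ?thesis unfolding Tup_def using p1 p2 by blast
qed

lemma evalw_b:
  assumes H: "subgroup H (RAAG V E)" and b: "bij_betw b (rcosets\<^bsub>RAAG V E\<^esub> H) {..<n}" and b0: "b H = 0"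
    and w: "w \<in> raag_words V"
  shows "evalw (tupH V E n H b) w = b (H #>\<^bsub>RAAG V E\<^esub> cls V E w)"
  using w
proof (induction w rule: rev_induct)
  case Nil
  interpret group "RAAG V E" by (rule raag_group)
  have "H \<subseteq> carrier (RAAG V E)" using H by (rule subgroup.subset)
  then show ?case using b0 by (simp add: evalw_def cls_one)
next
  case (snoc l w)
  interpret group "RAAG V E" by (rule raag_group)
  obtain v e where l: "l = (v, e)" by (cases l)
  have w: "w \<in> raag_words V" and v: "v \<in> V" using snoc(2) l by (auto simp: raag_words_def)
  have Hs: "H \<subseteq> carrier (RAAG V E)" using H by (rule subgroup.subset)
  have cw: "cls V E w \<in> carrier (RAAG V E)" using cls_in[OF w] .
  define C where "C = H #>\<^bsub>RAAG V E\<^esub> cls V E w"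
  have C: "C \<in> rcosets\<^bsub>RAAG V E\<^esub> H" unfolding C_def using Hs cw by (rule rcosetsI)
  have ev: "evalw (tupH V E n H b) (w @ [l]) =
      (if e then tupH V E n H b v (evalw (tupH V E n H b) w) else inv_into UNIV (tupH V E n H b v) (evalw (tupH V E n H b) w))"
    by (simp add: evalw_def l)
  have c2: "cls V E (w @ [l]) = cls V E w \<otimes>\<^bsub>RAAG V E\<^esub> gen V E v e"
    unfolding gen_def using w v l by (simp add: cls_mult raag_words_def)
  have t: "tupH V E n H b v = actg (RAAG V E) H n b (gen V E v True)" using v by (simp add: tupH_def)
  have IH: "evalw (tupH V E n H b) w = b C" using snoc(1)[OF w] C_def by simp
  have gc: "gen V E v True \<in> carrier (RAAG V E)" "gen V E v False \<in> carrier (RAAG V E)"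
    using gen_carrier[OF v] by auto
  have Cm: "C #>\<^bsub>RAAG V E\<^esub> gen V E v e = H #>\<^bsub>RAAG V E\<^esub> cls V E (w @ [l])"
    unfolding C_def c2 using coset_mult_assoc[OF Hs cw gen_carrier[OF v]] by simp
  show ?case
  proof (cases e)
    case True
    have "evalw (tupH V E n H b) (w @ [l]) = actg (RAAG V E) H n b (gen V E v True) (b C)"
      using ev t IH True by simp
    also have "\<dots> = b (C #>\<^bsub>RAAG V E\<^esub> gen V E v True)"
      by (rule act_facts(2)[OF H b gc(1) C])
    also have "\<dots> = b (H #>\<^bsub>RAAG V E\<^esub> cls V E (w @ [l]))" using Cm True by simp
    finally show ?thesis .
  next
    case False
    have "evalw (tupH V E n H b) (w @ [l]) = inv_into UNIV (actg (RAAG V E) H n b (gen V E v True)) (b C)"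
      using ev t IH False by simp
    also have "\<dots> = b (C #>\<^bsub>RAAG V E\<^esub> inv\<^bsub>RAAG V E\<^esub> gen V E v True)"
      by (rule act_facts(3)[OF H b gc(1) C])
    also have "\<dots> = b (C #>\<^bsub>RAAG V E\<^esub> gen V E v False)" using gen_inv[OF v] by simp
    also have "\<dots> = b (H #>\<^bsub>RAAG V E\<^esub> cls V E (w @ [l]))"
      using Cm False by (metis (full_types))
    finally show ?thesis .
  qed
qed


lemma Bset_card:
  assumes H: "subgroup H (RAAG V E)" and c: "card (rcosets\<^bsub>RAAG V E\<^esub> H) = n" and n: "n \<ge> 1"
  shows "fact (n - 1) \<le> card (Bset V E n H)" "finite (Bset V E n H)"
proof -
  interpret group "RAAG V E" by (rule raag_group)
  let ?Rc = "rcosets\<^bsub>RAAG V E\<^esub> H"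
  have fR: "finite ?Rc" using c n by (metis card.infinite not_one_le_zero)
  have Hs: "H \<subseteq> carrier (RAAG V E)" using H by (rule subgroup.subset)
  have HR: "H \<in> ?Rc" using rcosetsI[OF Hs one_closed] Hs by simp
  obtain b0 where b0: "bij_betw b0 ?Rc {..<n}" using finite_same_card_bij[OF fR, of "{..<n}"] c by auto
  have b0H: "b0 H \<in> {..<n}" using b0 HR by (auto simp: bij_betw_def)
  define t where "t = Transposition.transpose 0 (b0 H)"
  have tp: "t permutes {..<n}" unfolding t_def using n b0H by (intro permutes_swap_id) auto
  define b1 where "b1 = t \<circ> b0"
  have b1: "bij_betw b1 ?Rc {..<n}" unfolding b1_def using b0 permutes_imp_bij[OF tp] by (rule bij_betw_trans)
  have b1H: "b1 H = 0" by (simp add: b1_def t_def)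
  define Q where "Q = {\<pi>. \<pi> permutes {1..<n}}"
  define F where "F \<pi> = restrict (\<pi> \<circ> b1) ?Rc" for \<pi> :: "nat \<Rightarrow> nat"
  have Qp: "\<pi> permutes {..<n}" if "\<pi> \<in> Q" for \<pi>
  proof -
    have "\<pi> permutes {1..<n}" using that by (simp add: Q_def)
    moreover have "{1..<n} \<subseteq> {..<n}" by auto
    ultimately show ?thesis by (rule permutes_subset)
  qed
  have FB: "F \<pi> \<in> Bset V E n H" if "\<pi> \<in> Q" for \<pi>
  proof -
    have "bij_betw (\<pi> \<circ> b1) ?Rc {..<n}" using b1 permutes_imp_bij[OF Qp[OF that]] by (rule bij_betw_trans)
    then have "bij_betw (F \<pi>) ?Rc {..<n}" unfolding F_def
      by (rule bij_betw_cong[THEN iffD1, rotated]) simp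
    moreover have "F \<pi> H = 0" using HR b1H that permutes_not_in[of \<pi> "{1..<n}" 0]
      by (simp add: F_def Q_def)
    ultimately show ?thesis by (simp add: Bset_def F_def)
  qed
  have injF: "inj_on F Q"
  proof (rule inj_onI)
    fix \<pi> \<pi>' assume p: "\<pi> \<in> Q" "\<pi>' \<in> Q" "F \<pi> = F \<pi>'"
    show "\<pi> = \<pi>'"
    proof
      fix z show "\<pi> z = \<pi>' z"
      proof (cases "z < n")
        case True
        then obtain C where C: "C \<in> ?Rc" "z = b1 C" using b1 unfolding bij_betw_def by (metis imageE lessThan_iff)
        have "F \<pi> C = F \<pi>' C" using p(3) by simp
        then show ?thesis using C by (simp add: F_def)
      next
        case False
        then have "z \<notin> {1..<n}" by auto
        then show ?thesis using p(1,2) permutes_not_in unfolding Q_def by (metis mem_Collect_eq)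
      qed
    qed
  qed
  have sub: "Bset V E n H \<subseteq> PiE ?Rc (\<lambda>_. {..<n})"
    by (auto simp: Bset_def bij_betw_def PiE_def extensional_def)
  show fB: "finite (Bset V E n H)"
    using finite_subset[OF sub] fR by (simp add: finite_PiE)
  have "card Q = fact (n - 1)" unfolding Q_def by (rule card_permutations) auto
  then have "fact (n - 1) = card Q" by simp
  also have "\<dots> = card (F ` Q)" using injF by (simp add: card_image)
  also have "\<dots> \<le> card (Bset V E n H)" using FB fB by (intro card_mono) auto
  finally show "fact (n - 1) \<le> card (Bset V E n H)" .
qed

lemma recover:
  assumes H: "subgroup H (RAAG V E)" and b: "b \<in> Bset V E n H"
  shows "H = {x \<in> carrier (RAAG V E). \<exists>w \<in> raag_words V. x = cls V E w \<and> evalw (tupH V E n H b) w = 0}"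
proof -
  interpret group "RAAG V E" by (rule raag_group)
  let ?Rc = "rcosets\<^bsub>RAAG V E\<^esub> H"
  have bb: "bij_betw b ?Rc {..<n}" and b0: "b H = 0" using b by (auto simp: Bset_def)
  have Hs: "H \<subseteq> carrier (RAAG V E)" using H by (rule subgroup.subset)
  have HR: "H \<in> ?Rc" using rcosetsI[OF Hs one_closed] Hs by simp
  have key: "x \<in> H \<longleftrightarrow> evalw (tupH V E n H b) w = 0" if w: "w \<in> raag_words V" and x: "x = cls V E w" for x w
  proof -
    have xc: "x \<in> carrier (RAAG V E)" using x cls_in[OF w] by simp
    have ev: "evalw (tupH V E n H b) w = b (H #>\<^bsub>RAAG V E\<^esub> x)" using evalw_b[OF H bb b0 w] x by simp
    have xR: "H #>\<^bsub>RAAG V E\<^esub> x \<in> ?Rc" using rcosetsI[OF Hs xc] .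
    have "x \<in> H \<longleftrightarrow> H #>\<^bsub>RAAG V E\<^esub> x = H"
    proof
      assume "x \<in> H" then show "H #>\<^bsub>RAAG V E\<^esub> x = H" by (rule coset_join2[OF xc H])
    next
      assume "H #>\<^bsub>RAAG V E\<^esub> x = H" then show "x \<in> H" by (rule coset_join1[OF _ xc H])
    qed
    also have "\<dots> \<longleftrightarrow> b (H #>\<^bsub>RAAG V E\<^esub> x) = b H"
    proof
      assume "b (H #>\<^bsub>RAAG V E\<^esub> x) = b H"
      then show "H #>\<^bsub>RAAG V E\<^esub> x = H" using bb xR HR unfolding bij_betw_def inj_on_def by simp
    qed simp
    finally show ?thesis using ev b0 by simp
  qed
  show ?thesis
  proof
    show "H \<subseteq> {x \<in> carrier (RAAG V E). \<exists>w \<in> raag_words V. x = cls V E w \<and> evalw (tupH V E n H b) w = 0}"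
    proof
      fix x assume xH: "x \<in> H"
      then have xc: "x \<in> carrier (RAAG V E)" using Hs by auto
      then obtain w where w: "w \<in> raag_words V" "x = cls V E w" by (auto simp: carrier_raag)
      then show "x \<in> {x \<in> carrier (RAAG V E). \<exists>w \<in> raag_words V. x = cls V E w \<and> evalw (tupH V E n H b) w = 0}"
        using key[OF w] xH xc by blast
    qed
    show "{x \<in> carrier (RAAG V E). \<exists>w \<in> raag_words V. x = cls V E w \<and> evalw (tupH V E n H b) w = 0} \<subseteq> H"
      using key by blast
  qed
qed

lemma inj_tup:
  assumes "S \<subseteq> {H. subgroup H (RAAG V E)}"
  shows "inj_on (\<lambda>(H, b). tupH V E n H b) (SIGMA H:S. Bset V E n H)"
proof (rule inj_onI)
  interpret group "RAAG V E" by (rule raag_group)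
  fix p q assume p: "p \<in> (SIGMA H:S. Bset V E n H)" and q: "q \<in> (SIGMA H:S. Bset V E n H)"
    and e: "(\<lambda>(H, b). tupH V E n H b) p = (\<lambda>(H, b). tupH V E n H b) q"
  obtain H b where pH: "p = (H, b)" "H \<in> S" "b \<in> Bset V E n H" using p by auto
  obtain H' b' where qH: "q = (H', b')" "H' \<in> S" "b' \<in> Bset V E n H'" using q by auto
  have HS: "subgroup H (RAAG V E)" "subgroup H' (RAAG V E)" using assms pH qH by auto
  have T: "tupH V E n H b = tupH V E n H' b'" using e pH qH by simp
  have "H = H'" using recover[OF HS(1) pH(3)] recover[OF HS(2) qH(3)] T by simp
  have bb: "bij_betw b (rcosets\<^bsub>RAAG V E\<^esub> H) {..<n}" "b H = 0" using pH(3) by (auto simp: Bset_def)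
  have bb': "bij_betw b' (rcosets\<^bsub>RAAG V E\<^esub> H) {..<n}" "b' H = 0" using qH(3) \<open>H = H'\<close> by (auto simp: Bset_def)
  have Hs: "H \<subseteq> carrier (RAAG V E)" using HS(1) by (rule subgroup.subset)
  have "b = b'"
  proof (rule extensionalityI)
    show "b \<in> extensional (rcosets\<^bsub>RAAG V E\<^esub> H)" using pH(3) by (simp add: Bset_def)
    show "b' \<in> extensional (rcosets\<^bsub>RAAG V E\<^esub> H)" using qH(3) \<open>H = H'\<close> by (simp add: Bset_def)
    fix C assume C: "C \<in> rcosets\<^bsub>RAAG V E\<^esub> H"
    then obtain a where a: "a \<in> carrier (RAAG V E)" "C = H #>\<^bsub>RAAG V E\<^esub> a" unfolding RCOSETS_def by auto
    then obtain w where w: "w \<in> raag_words V" "a = cls V E w" by (auto simp: carrier_raag)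
    have "b C = evalw (tupH V E n H b) w" using evalw_b[OF HS(1) bb w(1)] a w by simp
    also have "\<dots> = evalw (tupH V E n H b') w" using T \<open>H = H'\<close> by simp
    also have "\<dots> = b' C" using evalw_b[OF HS(1) bb' w(1)] a w by simp
    finally show "b C = b' C" .
  qed
  then show "p = q" using pH qH \<open>H = H'\<close> by simp
qed

lemma final_arith:
  fixes s p a n :: nat
  assumes "s * fact (n - 1) \<le> (fact n * p) ^ a" "n \<ge> 1" "a \<ge> 1"
  shows "s \<le> p ^ a * n * fact n ^ (a - 1)"
proof -
  have fa: "fact n = n * fact (n - 1)" using assms(2) by (simp add: fact_reduce)
  have "(fact n * p) ^ a = fact n * fact n ^ (a - 1) * p ^ a"
    using assms(3) by (metis power_mult_distrib power_eq_if not_one_le_zero)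
  also have "\<dots> = fact (n - 1) * (p ^ a * n * fact n ^ (a - 1))" by (simp add: fa algebra_simps)
  finally have "fact (n - 1) * s \<le> fact (n - 1) * (p ^ a * n * fact n ^ (a - 1))"
    using assms(1) by (simp add: mult.commute)
  then show ?thesis by (simp add: fact_gt_zero)
qed

theorem mainTheorem6:
  fixes V :: "'a set" and E :: "'a \<Rightarrow> 'a \<Rightarrow> bool" and n :: nat
  assumes "simple_graph V E" and "bipartite V E" and "n \<ge> 1"
  shows "finite (subgroups_of_index (RAAG V E) n) \<and>
         card (subgroups_of_index (RAAG V E) n)
           \<le> num_partitions n ^ independence_number V E * n
              * (fact n) ^ (independence_number V E - 1)"
proof -
  define S where "S = subgroups_of_index (RAAG V E) n"
  define P where "P = (SIGMA H:S. Bset V E n H)"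
  define \<alpha> where "\<alpha> = independence_number V E"
  have SH: "S \<subseteq> {H. subgroup H (RAAG V E)}" by (auto simp: S_def subgroups_of_index_def)
  have Sc: "subgroup H (RAAG V E)" "card (rcosets\<^bsub>RAAG V E\<^esub> H) = n" if "H \<in> S" for H
    using that by (auto simp: S_def subgroups_of_index_def)
  have inj: "inj_on (\<lambda>(H, b). tupH V E n H b) P" unfolding P_def by (rule inj_tup[OF SH])
  have img: "(\<lambda>(H, b). tupH V E n H b) ` P \<subseteq> Tup V E n"
  proof
    fix z assume "z \<in> (\<lambda>(H, b). tupH V E n H b) ` P"
    then obtain H b where z: "z = tupH V E n H b" "H \<in> S" "b \<in> Bset V E n H" unfolding P_def by auto
    have "bij_betw b (rcosets\<^bsub>RAAG V E\<^esub> H) {..<n}" using z(3) by (simp add: Bset_def)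
    then show "z \<in> Tup V E n" using tupH_Tup[OF assms(1) Sc(1)[OF z(2)]] z(1) by simp
  qed
  have Tc: "finite (Tup V E n)" "card (Tup V E n) \<le> card (CP n) ^ \<alpha>"
    using card_Tup[OF assms(1,2), of n] by (auto simp: \<alpha>_def)
  have fP: "finite P"
    using finite_imageD[OF finite_subset[OF img Tc(1)] inj] .
  have cP: "card P \<le> card (Tup V E n)" using card_inj_on_le[OF inj img Tc(1)] .
  have Bc: "fact (n - 1) \<le> card (Bset V E n H)" "finite (Bset V E n H)" if "H \<in> S" for H
    using Bset_card[OF Sc[OF that] assms(3)] by auto
  have Bne: "Bset V E n H \<noteq> {}" if "H \<in> S" for H
    using Bc[OF that] fact_ge_1[of "n - 1"] by (metis card.empty not_one_le_zero order_trans)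
  have "S = fst ` P" unfolding P_def using Bne by force
  then have fS: "finite S" using fP by simp
  have "card S * fact (n - 1) \<le> (\<Sum>H\<in>S. card (Bset V E n H))"
    using sum_bounded_below[of S "fact (n - 1)" "\<lambda>H. card (Bset V E n H)"] Bc(1) by simp
  also have "\<dots> = card P" unfolding P_def using fS Bc(2) by (simp add: card_SigmaI)
  also have "\<dots> \<le> card (CP n) ^ \<alpha>" using cP Tc(2) by linarith
  also have "\<dots> \<le> (fact n * num_partitions n) ^ \<alpha>" using card_CP by (rule power_mono) simp
  finally have main: "card S * fact (n - 1) \<le> (fact n * num_partitions n) ^ \<alpha>" .
  have "\<alpha> \<ge> 1"
  proof -
    obtain v where v: "v \<in> V" using assms(1) by (auto simp: simple_graph_def)
    have "independent_set V E {v}" using v assms(1) by (auto simp: independent_set_def simple_graph_def)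
    then show ?thesis using indep_facts(2)[OF assms(1)] by (fastforce simp: \<alpha>_def)
  qed
  have "card S \<le> num_partitions n ^ \<alpha> * n * fact n ^ (\<alpha> - 1)"
    using final_arith[OF main assms(3) \<open>\<alpha> \<ge> 1\<close>] .
  then show ?thesis using fS unfolding S_def \<alpha>_def by simp
qed

end
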